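(* Let $\mathcal{C}_1\xleftarrow{F}\mathcal{C}_{12}\xrightarrow{G}\mathcal{C}_2$ be a correspondence in $\mathrm{Cats}'$ such that $F$ is an equivalence, and let $F^{-1}$ be a quasi-inverse of $F$. The following are equivalent: (a) the correspondence is admissible; (b) the map $\mathrm{Ob}\,\mathcal{C}_{12}\to\{(c_1,c_2,\psi)\mid c_i\in\mathrm{Ob}\,\mathcal{C}_i,\ \psi:GF^{-1}(c_1)\xrightarrow{\sim}c_2\}$ is bijective. Here the map sends $c$ to $(F(c),G(c),\psi)$, where $\psi:GF^{-1}F(c)\xrightarrow{\sim}G(c)$ is induced by the isomorphism $F^{-1}F(c)\xrightarrow{\sim}c$; (c) the functor $H=(F,G):\mathcal{C}_{12}\to\mathcal{C}_1\times\mathcal{C}_2$ has the following property: for every $c\in\mathcal{C}_{12}$, every isomorphism in $\mathcal{C}_1\times\mathcal{C}_2$ with source $H(c)$ has one and only one lift to an isomorphism in $\mathcal{C}_{12}$ with source $c$.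
   Context: $\mathrm{Cats}'$ is the naive 1-category of small categories, whose morphisms are functors on the nose. A correspondence from $\mathcal{C}_1$ to $\mathcal{C}_2$ is a diagram $\mathcal{C}_1\xleftarrow{F}\mathcal{C}_{12}\xrightarrow{G}\mathcal{C}_2$ in $\mathrm{Cats}'$. A morphism of correspondences is a functor $H$ between middle terms with $F'H=F$, $G'H=G$ on the nose. For a functor $\Phi:\mathcal{C}_1\to\mathcal{C}_2$, $\mathrm{Graph}(\Phi)$ is the correspondence $\mathcal{C}_1\leftarrow\mathrm{Graph}_\Phi\to\mathcal{C}_2$. Here $\mathrm{Graph}_\Phi$ is the category of triples $(c_1,c_2,\psi)$ with $\psi:\Phi(c_1)\xrightarrow{\sim}c_2$, and the arrows are the projections. A correspondence is admissible if it is isomorphic (as a correspondence) to $\mathrm{Graph}(\Phi)$ for some functor $\Phi:\mathcal{C}_1\to\mathcal{C}_2$. *)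

theory Defs
  imports Main
begin

text \<open>A small category: object set, arrow set, domain, codomain, identities and
composition (Cmp C g f is g after f). Values of the operations outside the
carriers are irrelevant.\<close>

record ('o, 'a) cat =
  Obj :: "'o set"
  Arr :: "'a set"
  Dm  :: "'a \<Rightarrow> 'o"
  Cd  :: "'a \<Rightarrow> 'o"
  Idt :: "'o \<Rightarrow> 'a"
  Cmp :: "'a \<Rightarrow> 'a \<Rightarrow> 'a"

definition category :: "('o, 'a) cat \<Rightarrow> bool" where
  "category C \<longleftrightarrow>
     (\<forall>f\<in>Arr C. Dm C f \<in> Obj C \<and> Cd C f \<in> Obj C) \<and>
     (\<forall>x\<in>Obj C. Idt C x \<in> Arr C \<and> Dm C (Idt C x) = x \<and> Cd C (Idt C x) = x) \<and>
     (\<forall>f\<in>Arr C. \<forall>g\<in>Arr C. Cd C f = Dm C g \<longrightarrow>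
        Cmp C g f \<in> Arr C \<and> Dm C (Cmp C g f) = Dm C f \<and> Cd C (Cmp C g f) = Cd C g) \<and>
     (\<forall>f\<in>Arr C. Cmp C f (Idt C (Dm C f)) = f \<and> Cmp C (Idt C (Cd C f)) f = f) \<and>
     (\<forall>f\<in>Arr C. \<forall>g\<in>Arr C. \<forall>h\<in>Arr C. Cd C f = Dm C g \<longrightarrow> Cd C g = Dm C h \<longrightarrow>
        Cmp C h (Cmp C g f) = Cmp C (Cmp C h g) f)"

definition hom :: "('o, 'a) cat \<Rightarrow> 'o \<Rightarrow> 'o \<Rightarrow> 'a set" where
  "hom C x y = {f \<in> Arr C. Dm C f = x \<and> Cd C f = y}"

definition iso :: "('o, 'a) cat \<Rightarrow> 'a \<Rightarrow> bool" where
  "iso C f \<longleftrightarrow> f \<in> Arr C \<and>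
     (\<exists>g\<in>Arr C. Dm C g = Cd C f \<and> Cd C g = Dm C f \<and>
        Cmp C g f = Idt C (Dm C f) \<and> Cmp C f g = Idt C (Cd C f))"

record ('o, 'a, 'p, 'b) ftr =
  FO :: "'o \<Rightarrow> 'p"
  FA :: "'a \<Rightarrow> 'b"

definition "functor" :: "('o, 'a) cat \<Rightarrow> ('p, 'b) cat \<Rightarrow> ('o, 'a, 'p, 'b) ftr \<Rightarrow> bool" where
  "functor C D F \<longleftrightarrow> category C \<and> category D \<and>
     (\<forall>x\<in>Obj C. FO F x \<in> Obj D) \<and>
     (\<forall>f\<in>Arr C. FA F f \<in> Arr D \<and> Dm D (FA F f) = FO F (Dm C f) \<and> Cd D (FA F f) = FO F (Cd C f)) \<and>
     (\<forall>x\<in>Obj C. FA F (Idt C x) = Idt D (FO F x)) \<and>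
     (\<forall>f\<in>Arr C. \<forall>g\<in>Arr C. Cd C f = Dm C g \<longrightarrow> FA F (Cmp C g f) = Cmp D (FA F g) (FA F f))"

definition fcomp :: "('p, 'b, 'q, 'c) ftr \<Rightarrow> ('o, 'a, 'p, 'b) ftr \<Rightarrow> ('o, 'a, 'q, 'c) ftr" where
  "fcomp G F = \<lparr>FO = FO G \<circ> FO F, FA = FA G \<circ> FA F\<rparr>"

definition fid :: "('o, 'a, 'o, 'a) ftr" where
  "fid = \<lparr>FO = id, FA = id\<rparr>"

definition feq :: "('o, 'a) cat \<Rightarrow> ('o, 'a, 'p, 'b) ftr \<Rightarrow> ('o, 'a, 'p, 'b) ftr \<Rightarrow> bool" where
  "feq C F G \<longleftrightarrow> (\<forall>x\<in>Obj C. FO F x = FO G x) \<and> (\<forall>f\<in>Arr C. FA F f = FA G f)"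

definition nat_iso :: "('o, 'a) cat \<Rightarrow> ('p, 'b) cat \<Rightarrow> ('o, 'a, 'p, 'b) ftr \<Rightarrow>
    ('o, 'a, 'p, 'b) ftr \<Rightarrow> ('o \<Rightarrow> 'b) \<Rightarrow> bool" where
  "nat_iso C D F G \<eta> \<longleftrightarrow> functor C D F \<and> functor C D G \<and>
     (\<forall>x\<in>Obj C. \<eta> x \<in> hom D (FO F x) (FO G x) \<and> iso D (\<eta> x)) \<and>
     (\<forall>f\<in>Arr C. Cmp D (\<eta> (Cd C f)) (FA F f) = Cmp D (FA G f) (\<eta> (Dm C f)))"

definition quasi_inverse :: "('o, 'a) cat \<Rightarrow> ('p, 'b) cat \<Rightarrow> ('o, 'a, 'p, 'b) ftr \<Rightarrow>
    ('p, 'b, 'o, 'a) ftr \<Rightarrow> ('o \<Rightarrow> 'a) \<Rightarrow> ('p \<Rightarrow> 'b) \<Rightarrow> bool" where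
  "quasi_inverse C D F Finv \<eta> \<epsilon> \<longleftrightarrow> functor C D F \<and> functor D C Finv \<and>
     nat_iso C C (fcomp Finv F) fid \<eta> \<and> nat_iso D D (fcomp F Finv) fid \<epsilon>"

definition equivalence :: "('o, 'a) cat \<Rightarrow> ('p, 'b) cat \<Rightarrow> ('o, 'a, 'p, 'b) ftr \<Rightarrow> bool" where
  "equivalence C D F \<longleftrightarrow> (\<exists>Finv \<eta> \<epsilon>. quasi_inverse C D F Finv \<eta> \<epsilon>)"

definition product_cat :: "('o, 'a) cat \<Rightarrow> ('p, 'b) cat \<Rightarrow> ('o \<times> 'p, 'a \<times> 'b) cat" where
  "product_cat C D = \<lparr>Obj = Obj C \<times> Obj D, Arr = Arr C \<times> Arr D,
     Dm = (\<lambda>(f, g). (Dm C f, Dm D g)), Cd = (\<lambda>(f, g). (Cd C f, Cd D g)),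
     Idt = (\<lambda>(x, y). (Idt C x, Idt D y)),
     Cmp = (\<lambda>(f', g') (f, g). (Cmp C f' f, Cmp D g' g))\<rparr>"

definition pair_ftr :: "('o, 'a, 'p, 'b) ftr \<Rightarrow> ('o, 'a, 'q, 'c) ftr \<Rightarrow> ('o, 'a, 'p \<times> 'q, 'b \<times> 'c) ftr" where
  "pair_ftr F G = \<lparr>FO = (\<lambda>x. (FO F x, FO G x)), FA = (\<lambda>f. (FA F f, FA G f))\<rparr>"

text \<open>Arrows: (source, target, f1, f2) with f1 : c1 \<rightarrow> c1', f2 : c2 \<rightarrow> c2' and
  psi' \<circ> Phi(f1) = f2 \<circ> psi.\<close>

definition graph_obj :: "('o1, 'a1) cat \<Rightarrow> ('o2, 'a2) cat \<Rightarrow> ('o1, 'a1, 'o2, 'a2) ftr \<Rightarrow>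
    ('o1 \<times> 'o2 \<times> 'a2) set" where
  "graph_obj C1 C2 \<Phi> = {(c1, c2, \<psi>). c1 \<in> Obj C1 \<and> c2 \<in> Obj C2 \<and>
      \<psi> \<in> hom C2 (FO \<Phi> c1) c2 \<and> iso C2 \<psi>}"

definition graph_cat :: "('o1, 'a1) cat \<Rightarrow> ('o2, 'a2) cat \<Rightarrow> ('o1, 'a1, 'o2, 'a2) ftr \<Rightarrow>
    ('o1 \<times> 'o2 \<times> 'a2,
     ('o1 \<times> 'o2 \<times> 'a2) \<times> ('o1 \<times> 'o2 \<times> 'a2) \<times> 'a1 \<times> 'a2) cat" where
  "graph_cat C1 C2 \<Phi> = \<lparr>
     Obj = graph_obj C1 C2 \<Phi>,
     Arr = {((c1, c2, \<psi>), (d1, d2, \<chi>), f1, f2).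
              (c1, c2, \<psi>) \<in> graph_obj C1 C2 \<Phi> \<and> (d1, d2, \<chi>) \<in> graph_obj C1 C2 \<Phi> \<and>
              f1 \<in> hom C1 c1 d1 \<and> f2 \<in> hom C2 c2 d2 \<and>
              Cmp C2 \<chi> (FA \<Phi> f1) = Cmp C2 f2 \<psi>},
     Dm = (\<lambda>(x, y, f1, f2). x),
     Cd = (\<lambda>(x, y, f1, f2). y),
     Idt = (\<lambda>(c1, c2, \<psi>). ((c1, c2, \<psi>), (c1, c2, \<psi>), Idt C1 c1, Idt C2 c2)),
     Cmp = (\<lambda>(y', z, g1, g2) (x, y, f1, f2). (x, z, Cmp C1 g1 f1, Cmp C2 g2 f2)) \<rparr>"

definition graph_p1 :: "('o1 \<times> 'o2 \<times> 'a2, ('o1 \<times> 'o2 \<times> 'a2) \<times> ('o1 \<times> 'o2 \<times> 'a2) \<times> 'a1 \<times> 'a2, 'o1, 'a1) ftr" where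
  "graph_p1 = \<lparr>FO = (\<lambda>(c1, c2, \<psi>). c1), FA = (\<lambda>(x, y, f1, f2). f1)\<rparr>"

definition graph_p2 :: "('o1 \<times> 'o2 \<times> 'a2, ('o1 \<times> 'o2 \<times> 'a2) \<times> ('o1 \<times> 'o2 \<times> 'a2) \<times> 'a1 \<times> 'a2, 'o2, 'a2) ftr" where
  "graph_p2 = \<lparr>FO = (\<lambda>(c1, c2, \<psi>). c2), FA = (\<lambda>(x, y, f1, f2). f2)\<rparr>"

definition corr_iso ::
  "('o, 'a) cat \<Rightarrow> ('o', 'a') cat \<Rightarrow>
   ('o, 'a, 'o1, 'a1) ftr \<Rightarrow> ('o, 'a, 'o2, 'a2) ftr \<Rightarrow>
   ('o', 'a', 'o1, 'a1) ftr \<Rightarrow> ('o', 'a', 'o2, 'a2) ftr \<Rightarrow>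
   ('o, 'a, 'o', 'a') ftr \<Rightarrow> bool" where
  "corr_iso C12 C12' F G F' G' K \<longleftrightarrow> functor C12 C12' K \<and>
     (\<exists>K'. functor C12' C12 K' \<and> feq C12 (fcomp K' K) fid \<and> feq C12' (fcomp K K') fid) \<and>
     feq C12 (fcomp F' K) F \<and> feq C12 (fcomp G' K) G"

definition admissible ::
  "('o1, 'a1) cat \<Rightarrow> ('o2, 'a2) cat \<Rightarrow> ('o, 'a) cat \<Rightarrow>
   ('o, 'a, 'o1, 'a1) ftr \<Rightarrow> ('o, 'a, 'o2, 'a2) ftr \<Rightarrow> bool" where
  "admissible C1 C2 C12 F G \<longleftrightarrow>
     (\<exists>\<Phi>. functor C1 C2 \<Phi> \<and>
        (\<exists>K. corr_iso C12 (graph_cat C1 C2 \<Phi>) F G graph_p1 graph_p2 K))"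

end

theory Submission
  imports Defs
begin


section \<open>Category basics\<close>

definition isinv where
  "isinv C f g \<longleftrightarrow> g \<in> Arr C \<and> Dm C g = Cd C f \<and> Cd C g = Dm C f \<and>
        Cmp C g f = Idt C (Dm C f) \<and> Cmp C f g = Idt C (Cd C f)"

definition cinv where "cinv C f = (SOME g. isinv C f g)"

context fixes C :: "('o,'a) cat" assumes cat: "category C"
begin
lemma cat_parts:
  "\<forall>f\<in>Arr C. Dm C f \<in> Obj C \<and> Cd C f \<in> Obj C"
  "\<forall>x\<in>Obj C. Idt C x \<in> Arr C \<and> Dm C (Idt C x) = x \<and> Cd C (Idt C x) = x"
  "\<forall>f\<in>Arr C. \<forall>g\<in>Arr C. Cd C f = Dm C g \<longrightarrow>
        Cmp C g f \<in> Arr C \<and> Dm C (Cmp C g f) = Dm C f \<and> Cd C (Cmp C g f) = Cd C g"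
  "\<forall>f\<in>Arr C. Cmp C f (Idt C (Dm C f)) = f \<and> Cmp C (Idt C (Cd C f)) f = f"
  "\<forall>f\<in>Arr C. \<forall>g\<in>Arr C. \<forall>h\<in>Arr C. Cd C f = Dm C g \<longrightarrow> Cd C g = Dm C h \<longrightarrow>
        Cmp C h (Cmp C g f) = Cmp C (Cmp C h g) f"
  using cat unfolding category_def by auto
lemma dm_obj: "f \<in> Arr C \<Longrightarrow> Dm C f \<in> Obj C" using cat_parts(1) by blast
lemma cd_obj: "f \<in> Arr C \<Longrightarrow> Cd C f \<in> Obj C" using cat_parts(1) by blast
lemma id_arr: "x \<in> Obj C \<Longrightarrow> Idt C x \<in> Arr C" using cat_parts(2) by blast
lemma id_dm: "x \<in> Obj C \<Longrightarrow> Dm C (Idt C x) = x" using cat_parts(2) by blast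
lemma id_cd: "x \<in> Obj C \<Longrightarrow> Cd C (Idt C x) = x" using cat_parts(2) by blast
lemma cmp_arr: "f \<in> Arr C \<Longrightarrow> g \<in> Arr C \<Longrightarrow> Cd C f = Dm C g \<Longrightarrow> Cmp C g f \<in> Arr C"
  using cat_parts(3) by blast
lemma cmp_dm: "f \<in> Arr C \<Longrightarrow> g \<in> Arr C \<Longrightarrow> Cd C f = Dm C g \<Longrightarrow> Dm C (Cmp C g f) = Dm C f"
  using cat_parts(3) by blast
lemma cmp_cd: "f \<in> Arr C \<Longrightarrow> g \<in> Arr C \<Longrightarrow> Cd C f = Dm C g \<Longrightarrow> Cd C (Cmp C g f) = Cd C g"
  using cat_parts(3) by blast
lemma cmp_idr: "f \<in> Arr C \<Longrightarrow> Cmp C f (Idt C (Dm C f)) = f" using cat_parts(4) by blast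
lemma cmp_idl: "f \<in> Arr C \<Longrightarrow> Cmp C (Idt C (Cd C f)) f = f" using cat_parts(4) by blast
lemma cmp_idr': "f \<in> Arr C \<Longrightarrow> x = Dm C f \<Longrightarrow> Cmp C f (Idt C x) = f" using cmp_idr by blast
lemma cmp_idl': "f \<in> Arr C \<Longrightarrow> x = Cd C f \<Longrightarrow> Cmp C (Idt C x) f = f" using cmp_idl by blast
lemma assoc: "f \<in> Arr C \<Longrightarrow> g \<in> Arr C \<Longrightarrow> h \<in> Arr C \<Longrightarrow> Cd C f = Dm C g \<Longrightarrow> Cd C g = Dm C h \<Longrightarrow>
   Cmp C (Cmp C h g) f = Cmp C h (Cmp C g f)"
  using cat_parts(5) by simp

lemmas csimps = dm_obj cd_obj id_arr id_dm id_cd cmp_arr cmp_dm cmp_cd cmp_idr' cmp_idl' 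

lemma cinv: assumes "iso C f" shows "isinv C f (cinv C f)"
proof -
  have "\<exists>g. isinv C f g" using assms unfolding iso_def isinv_def by blast
  then show ?thesis unfolding cinv_def by (rule someI_ex)
qed

lemma cinv_arr: "iso C f \<Longrightarrow> cinv C f \<in> Arr C" using cinv unfolding isinv_def by simp
lemma cinv_dm: "iso C f \<Longrightarrow> Dm C (cinv C f) = Cd C f" using cinv unfolding isinv_def by simp
lemma cinv_cd: "iso C f \<Longrightarrow> Cd C (cinv C f) = Dm C f" using cinv unfolding isinv_def by simp
lemma cinv_l: "iso C f \<Longrightarrow> Cmp C (cinv C f) f = Idt C (Dm C f)" using cinv unfolding isinv_def by simp
lemma cinv_r: "iso C f \<Longrightarrow> Cmp C f (cinv C f) = Idt C (Cd C f)" using cinv unfolding isinv_def by simp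
lemma iso_arr: "iso C f \<Longrightarrow> f \<in> Arr C" unfolding iso_def by blast

lemma cinv_iso: assumes "iso C f" shows "iso C (cinv C f)"
  unfolding iso_def
  by (intro conjI bexI[of _ f]) (simp_all add: assms cinv_arr cinv_dm cinv_cd cinv_l cinv_r iso_arr)

lemma epi_cancel:
  assumes "iso C e" "g \<in> Arr C" "h \<in> Arr C" "Dm C g = Cd C e" "Dm C h = Cd C e"
    "Cmp C g e = Cmp C h e"
  shows "g = h"
proof -
  have e: "e \<in> Arr C" "cinv C e \<in> Arr C" "Cd C (cinv C e) = Dm C e" "Dm C (cinv C e) = Cd C e"
    "Cmp C e (cinv C e) = Idt C (Cd C e)"
    using assms iso_arr cinv_arr cinv_cd cinv_dm cinv_r by auto
  have "g = Cmp C g (Cmp C e (cinv C e))" using assms e by (simp add: csimps)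
  also have "\<dots> = Cmp C (Cmp C g e) (cinv C e)"
    using assms(1-5) e by (simp add: assoc)
  also have "\<dots> = Cmp C (Cmp C h e) (cinv C e)" by (simp only: assms(6))
  also have "\<dots> = Cmp C h (Cmp C e (cinv C e))"
    using assms(1-5) e by (simp add: assoc)
  also have "\<dots> = h" using assms e by (simp add: csimps)
  finally show ?thesis .
qed

lemma mono_cancel:
  assumes "iso C m" "g \<in> Arr C" "h \<in> Arr C" "Cd C g = Dm C m" "Cd C h = Dm C m"
    "Cmp C m g = Cmp C m h"
  shows "g = h"
proof -
  have e: "m \<in> Arr C" "cinv C m \<in> Arr C" "Cd C (cinv C m) = Dm C m" "Dm C (cinv C m) = Cd C m"
    "Cmp C (cinv C m) m = Idt C (Dm C m)"
    using assms iso_arr cinv_arr cinv_cd cinv_dm cinv_l by auto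
  have "g = Cmp C (Cmp C (cinv C m) m) g" using assms e by (simp add: csimps)
  also have "\<dots> = Cmp C (cinv C m) (Cmp C m g)"
    using assms(1-5) e by (intro assoc) auto
  also have "\<dots> = Cmp C (cinv C m) (Cmp C m h)" by (simp only: assms(6))
  also have "\<dots> = Cmp C (Cmp C (cinv C m) m) h"
    using assms(1-5) e by (intro assoc[symmetric]) auto
  also have "\<dots> = h" using assms e by (simp add: csimps)
  finally show ?thesis .
qed

lemma iso_cmp:
  assumes "iso C f" "iso C g" "Cd C f = Dm C g"
  shows "iso C (Cmp C g f)"
proof -
  have a: "f \<in> Arr C" "g \<in> Arr C" "cinv C f \<in> Arr C" "cinv C g \<in> Arr C" using assms iso_arr cinv_arr by auto
  have d: "Dm C (cinv C f) = Cd C f" "Cd C (cinv C f) = Dm C f" "Dm C (cinv C g) = Cd C g" "Cd C (cinv C g) = Dm C g"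
    using assms cinv_dm cinv_cd by auto
  have l: "Cmp C (cinv C f) f = Idt C (Dm C f)" "Cmp C (cinv C g) g = Idt C (Dm C g)"
    "Cmp C f (cinv C f) = Idt C (Cd C f)" "Cmp C g (cinv C g) = Idt C (Cd C g)"
    using assms cinv_l cinv_r by auto
  let ?k = "Cmp C (cinv C f) (cinv C g)"
  have k: "?k \<in> Arr C" "Dm C ?k = Cd C g" "Cd C ?k = Dm C f" using a d assms by (simp_all add: csimps)
  have "Cmp C ?k (Cmp C g f) = Cmp C (cinv C f) (Cmp C (Cmp C (cinv C g) g) f)"
    using a d assms by (simp add: assoc csimps)
  also have "\<dots> = Idt C (Dm C f)" using a d assms l by (simp add: csimps)
  finally have 1: "Cmp C ?k (Cmp C g f) = Idt C (Dm C (Cmp C g f))" using a assms by (simp add: csimps)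
  have "Cmp C (Cmp C g f) ?k = Cmp C g (Cmp C (Cmp C f (cinv C f)) (cinv C g))"
    using a d assms by (simp add: assoc csimps)
  also have "\<dots> = Idt C (Cd C g)" using a d assms l by (simp add: csimps)
  finally have 2: "Cmp C (Cmp C g f) ?k = Idt C (Cd C (Cmp C g f))" using a assms by (simp add: csimps)
  show ?thesis unfolding iso_def using 1 2 k a assms
    by (intro conjI bexI[of _ ?k]) (simp_all add: csimps)
qed

lemma iso_id: "x \<in> Obj C \<Longrightarrow> iso C (Idt C x)"
  unfolding iso_def by (intro conjI bexI[of _ "Idt C x"]) (simp_all add: csimps)

end


lemma fcomp_FO[simp]: "FO (fcomp G F) x = FO G (FO F x)" by (simp add: fcomp_def)
lemma fcomp_FA[simp]: "FA (fcomp G F) x = FA G (FA F x)" by (simp add: fcomp_def)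
lemma fid_FO[simp]: "FO fid x = x" by (simp add: fid_def)
lemma fid_FA[simp]: "FA fid x = x" by (simp add: fid_def)

context fixes C :: "('o,'a) cat" and D :: "('p,'b) cat" and K assumes fu: "functor C D K"
begin
lemma fparts:
  "category C" "category D"
  "\<forall>x\<in>Obj C. FO K x \<in> Obj D"
  "\<forall>f\<in>Arr C. FA K f \<in> Arr D \<and> Dm D (FA K f) = FO K (Dm C f) \<and> Cd D (FA K f) = FO K (Cd C f)"
  "\<forall>x\<in>Obj C. FA K (Idt C x) = Idt D (FO K x)"
  "\<forall>f\<in>Arr C. \<forall>g\<in>Arr C. Cd C f = Dm C g \<longrightarrow> FA K (Cmp C g f) = Cmp D (FA K g) (FA K f)"
  using fu unfolding functor_def by auto
lemma fc1: "category C" using fparts by blast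
lemma fc2: "category D" using fparts by blast
lemma fobj: "x \<in> Obj C \<Longrightarrow> FO K x \<in> Obj D" using fparts by blast
lemma farr: "f \<in> Arr C \<Longrightarrow> FA K f \<in> Arr D" using fparts by blast
lemma fdm: "f \<in> Arr C \<Longrightarrow> Dm D (FA K f) = FO K (Dm C f)" using fparts by blast
lemma fcd: "f \<in> Arr C \<Longrightarrow> Cd D (FA K f) = FO K (Cd C f)" using fparts by blast
lemma fidt: "x \<in> Obj C \<Longrightarrow> FA K (Idt C x) = Idt D (FO K x)" using fparts by blast
lemma fcmp: "f \<in> Arr C \<Longrightarrow> g \<in> Arr C \<Longrightarrow> Cd C f = Dm C g \<Longrightarrow> FA K (Cmp C g f) = Cmp D (FA K g) (FA K f)"
  using fparts by blast

lemma fiso: assumes "iso C f" shows "iso D (FA K f)"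
proof -
  have a: "f \<in> Arr C" "cinv C f \<in> Arr C" "Dm C (cinv C f) = Cd C f" "Cd C (cinv C f) = Dm C f"
    using assms fc1 by (simp_all add: iso_arr cinv_arr cinv_dm cinv_cd)
  have l: "Cmp C (cinv C f) f = Idt C (Dm C f)" "Cmp C f (cinv C f) = Idt C (Cd C f)"
    using assms fc1 by (simp_all add: cinv_l cinv_r)
  have "FA K (Cmp C (cinv C f) f) = Cmp D (FA K (cinv C f)) (FA K f)" using a fcmp by simp
  moreover have "FA K (Cmp C f (cinv C f)) = Cmp D (FA K f) (FA K (cinv C f))" using a fcmp by simp
  ultimately show ?thesis unfolding iso_def using a l
    by (intro conjI bexI[of _ "FA K (cinv C f)"]) (simp_all add: farr fdm fcd fidt fc1 dm_obj cd_obj)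
qed

lemma fcinv: assumes "iso C f" shows "FA K (cinv C f) = cinv D (FA K f)"
proof -
  have a: "f \<in> Arr C" "cinv C f \<in> Arr C" "Dm C (cinv C f) = Cd C f" "Cd C (cinv C f) = Dm C f"
    using assms fc1 by (simp_all add: iso_arr cinv_arr cinv_dm cinv_cd)
  have l: "Cmp C (cinv C f) f = Idt C (Dm C f)"
    using assms fc1 by (simp_all add: cinv_l cinv_r)
  have i: "iso D (FA K f)" using fiso assms by blast
  have "Cmp D (FA K (cinv C f)) (FA K f) = Cmp D (cinv D (FA K f)) (FA K f)"
    using a l fcmp[of f "cinv C f"] cinv_l[OF fc2 i] by (simp add: fdm fidt fc1 dm_obj)
  then show ?thesis
    using epi_cancel[OF fc2 i] a i cinv_arr[OF fc2 i] cinv_dm[OF fc2 i] by (simp add: farr fdm fcd)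
qed
end

lemma functor_fcomp:
  assumes "functor C D F" "functor D E G" shows "functor C E (fcomp G F)"
  using assms unfolding functor_def by auto


locale S =
  fixes C1 :: "('o1, 'a1) cat" and C2 :: "('o2, 'a2) cat" and C12 :: "('o, 'a) cat"
    and F :: "('o, 'a, 'o1, 'a1) ftr" and G :: "('o, 'a, 'o2, 'a2) ftr"
    and Finv :: "('o1, 'a1, 'o, 'a) ftr" and \<eta> :: "'o \<Rightarrow> 'a" and \<epsilon> :: "'o1 \<Rightarrow> 'a1"
  assumes F: "functor C12 C1 F" and G: "functor C12 C2 G"
    and qi: "quasi_inverse C12 C1 F Finv \<eta> \<epsilon>"
begin

lemma cat1: "category C1" using F fc2 by blast
lemma cat2: "category C2" using G fc2 by blast
lemma cat12: "category C12" using F fc1 by blast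
lemma Finv: "functor C1 C12 Finv" using qi unfolding quasi_inverse_def by blast

lemma eta_parts:
  "\<forall>x\<in>Obj C12. \<eta> x \<in> hom C12 (FO Finv (FO F x)) x \<and> iso C12 (\<eta> x)"
  "\<forall>f\<in>Arr C12. Cmp C12 (\<eta> (Cd C12 f)) (FA Finv (FA F f)) = Cmp C12 f (\<eta> (Dm C12 f))"
  using qi unfolding quasi_inverse_def nat_iso_def by auto
lemma eps_parts:
  "\<forall>x\<in>Obj C1. \<epsilon> x \<in> hom C1 (FO F (FO Finv x)) x \<and> iso C1 (\<epsilon> x)"
  "\<forall>f\<in>Arr C1. Cmp C1 (\<epsilon> (Cd C1 f)) (FA F (FA Finv f)) = Cmp C1 f (\<epsilon> (Dm C1 f))"
  using qi unfolding quasi_inverse_def nat_iso_def by auto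

lemma eta_arr: "c \<in> Obj C12 \<Longrightarrow> \<eta> c \<in> Arr C12" using eta_parts(1) unfolding hom_def by blast
lemma eta_dm: "c \<in> Obj C12 \<Longrightarrow> Dm C12 (\<eta> c) = FO Finv (FO F c)" using eta_parts(1) unfolding hom_def by blast
lemma eta_cd: "c \<in> Obj C12 \<Longrightarrow> Cd C12 (\<eta> c) = c" using eta_parts(1) unfolding hom_def by blast
lemma eta_iso: "c \<in> Obj C12 \<Longrightarrow> iso C12 (\<eta> c)" using eta_parts(1) by blast
lemma eta_nat: "f \<in> Arr C12 \<Longrightarrow> Cmp C12 (\<eta> (Cd C12 f)) (FA Finv (FA F f)) = Cmp C12 f (\<eta> (Dm C12 f))"
  using eta_parts(2) by blast
lemma eps_arr: "c \<in> Obj C1 \<Longrightarrow> \<epsilon> c \<in> Arr C1" using eps_parts(1) unfolding hom_def by blast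
lemma eps_dm: "c \<in> Obj C1 \<Longrightarrow> Dm C1 (\<epsilon> c) = FO F (FO Finv c)" using eps_parts(1) unfolding hom_def by blast
lemma eps_cd: "c \<in> Obj C1 \<Longrightarrow> Cd C1 (\<epsilon> c) = c" using eps_parts(1) unfolding hom_def by blast
lemma eps_iso: "c \<in> Obj C1 \<Longrightarrow> iso C1 (\<epsilon> c)" using eps_parts(1) by blast
lemma eps_nat: "f \<in> Arr C1 \<Longrightarrow> Cmp C1 (\<epsilon> (Cd C1 f)) (FA F (FA Finv f)) = Cmp C1 f (\<epsilon> (Dm C1 f))"
  using eps_parts(2) by blast

lemmas fsimps = cat1 cat2 cat12 Finv F G
  farr[OF F] fdm[OF F] fcd[OF F] fobj[OF F]
  farr[OF G] fdm[OF G] fcd[OF G] fobj[OF G]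
  farr[OF Finv] fdm[OF Finv] fcd[OF Finv] fobj[OF Finv]
  eta_arr eta_dm eta_cd eps_arr eps_dm eps_cd
  csimps[OF cat1] csimps[OF cat2] csimps[OF cat12]

lemma F_faithful:
  assumes "f \<in> Arr C12" "g \<in> Arr C12" "Dm C12 f = Dm C12 g" "Cd C12 f = Cd C12 g" "FA F f = FA F g"
  shows "f = g"
proof -
  have "Cmp C12 f (\<eta> (Dm C12 f)) = Cmp C12 g (\<eta> (Dm C12 f))"
    using eta_nat[OF assms(1)] eta_nat[OF assms(2)] assms by simp
  then show ?thesis
    using epi_cancel[OF cat12 eta_iso[of "Dm C12 f"]] assms by (simp add: fsimps)
qed

lemma Finv_faithful:
  assumes "f \<in> Arr C1" "g \<in> Arr C1" "Dm C1 f = Dm C1 g" "Cd C1 f = Cd C1 g" "FA Finv f = FA Finv g"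
  shows "f = g"
proof -
  have "Cmp C1 f (\<epsilon> (Dm C1 f)) = Cmp C1 g (\<epsilon> (Dm C1 f))"
    using eps_nat[OF assms(1)] eps_nat[OF assms(2)] assms by simp
  then show ?thesis
    using epi_cancel[OF cat1 eps_iso[of "Dm C1 f"]] assms by (simp add: fsimps)
qed

end

context S begin
lemma F_full:
  assumes "a \<in> Arr C1" "c \<in> Obj C12" "d \<in> Obj C12" "Dm C1 a = FO F c" "Cd C1 a = FO F d"
  shows "\<exists>f\<in>Arr C12. Dm C12 f = c \<and> Cd C12 f = d \<and> FA F f = a"
proof -
  have ic: "iso C12 (\<eta> c)" using eta_iso assms by blast
  have ci: "cinv C12 (\<eta> c) \<in> Arr C12" "Dm C12 (cinv C12 (\<eta> c)) = c"
      "Cd C12 (cinv C12 (\<eta> c)) = FO Finv (FO F c)"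
      "Cmp C12 (cinv C12 (\<eta> c)) (\<eta> c) = Idt C12 (FO Finv (FO F c))"
    using ic assms cinv_arr[OF cat12 ic] cinv_dm[OF cat12 ic] cinv_cd[OF cat12 ic] cinv_l[OF cat12 ic]
    by (simp_all add: fsimps)
  define f where "f = Cmp C12 (\<eta> d) (Cmp C12 (FA Finv a) (cinv C12 (\<eta> c)))"
  have f: "f \<in> Arr C12" "Dm C12 f = c" "Cd C12 f = d" unfolding f_def using assms ci
    by (simp_all add: fsimps)
  have "Cmp C12 (\<eta> d) (FA Finv (FA F f)) = Cmp C12 f (\<eta> c)"
    using eta_nat[OF f(1)] f by simp
  also have "\<dots> = Cmp C12 (\<eta> d) (Cmp C12 (FA Finv a) (Cmp C12 (cinv C12 (\<eta> c)) (\<eta> c)))"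
    unfolding f_def using assms ci by (simp add: fsimps assoc[OF cat12])
  also have "\<dots> = Cmp C12 (\<eta> d) (FA Finv a)"
    using assms ci by (simp add: fsimps)
  finally have "FA Finv (FA F f) = FA Finv a"
    by (rule mono_cancel[OF cat12 eta_iso[OF assms(3)], rotated -1]) (use assms f in \<open>simp_all add: fsimps\<close>)
  then have "FA F f = a" by (intro Finv_faithful) (use assms f in \<open>simp_all add: fsimps\<close>)
  then show ?thesis using f by blast
qed
end

context S begin
lemma F_reflect_iso:
  assumes "f \<in> Arr C12" "iso C1 (FA F f)"
  shows "iso C12 f"
proof -
  let ?a = "FA F f"
  have ci: "cinv C1 ?a \<in> Arr C1" "Dm C1 (cinv C1 ?a) = FO F (Cd C12 f)" "Cd C1 (cinv C1 ?a) = FO F (Dm C12 f)"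
    "Cmp C1 (cinv C1 ?a) ?a = Idt C1 (FO F (Dm C12 f))" "Cmp C1 ?a (cinv C1 ?a) = Idt C1 (FO F (Cd C12 f))"
    using assms cinv_arr[OF cat1 assms(2)] cinv_dm[OF cat1 assms(2)] cinv_cd[OF cat1 assms(2)]
      cinv_l[OF cat1 assms(2)] cinv_r[OF cat1 assms(2)] by (simp_all add: fsimps)
  obtain g where g: "g \<in> Arr C12" "Dm C12 g = Cd C12 f" "Cd C12 g = Dm C12 f" "FA F g = cinv C1 ?a"
    using F_full[OF ci(1) _ _ ci(2,3)] assms by (auto simp: fsimps)
  have 1: "Cmp C12 g f = Idt C12 (Dm C12 f)"
    apply (rule F_faithful)
    using assms g ci fcmp[OF F] fidt[OF F] by (simp_all add: fsimps)
  have 2: "Cmp C12 f g = Idt C12 (Cd C12 f)"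
    apply (rule F_faithful)
    using assms g ci fcmp[OF F] fidt[OF F] by (simp_all add: fsimps)
  show ?thesis unfolding iso_def using 1 2 g assms by blast
qed
end


lemma iso_prod: "iso (product_cat C1 C2) (u1, u2) \<longleftrightarrow> iso C1 u1 \<and> iso C2 u2"
  unfolding iso_def product_cat_def by auto

lemma cancel_inv_r:
  assumes "category C" "iso C k" "x \<in> Arr C" "Dm C x = Dm C k"
  shows "Cmp C (Cmp C x (cinv C k)) k = x"
proof -
  have "Cmp C (Cmp C x (cinv C k)) k = Cmp C x (Cmp C (cinv C k) k)"
    using assms by (intro assoc) (simp_all add: cinv_arr cinv_dm cinv_cd iso_arr)
  also have "\<dots> = x" using assms by (simp add: cinv_l csimps iso_arr cinv_cd)
  finally show ?thesis .
qed

context S begin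

definition Tset where
  "Tset = {(c1, c2, \<psi>). c1 \<in> Obj C1 \<and> c2 \<in> Obj C2 \<and>
                \<psi> \<in> hom C2 (FO G (FO Finv c1)) c2 \<and> iso C2 \<psi>}"
definition mapb where "mapb = (\<lambda>c. (FO F c, FO G c, FA G (\<eta> c)))"

definition condc where
  "condc \<longleftrightarrow> (\<forall>c\<in>Obj C12. \<forall>u. iso (product_cat C1 C2) u \<and>
               Dm (product_cat C1 C2) u = FO (pair_ftr F G) c \<longrightarrow>
              (\<exists>!h. iso C12 h \<and> Dm C12 h = c \<and> FA (pair_ftr F G) h = u))"

lemma G_nat: "f \<in> Arr C12 \<Longrightarrow>
  Cmp C2 (FA G (\<eta> (Cd C12 f))) (FA G (FA Finv (FA F f))) = Cmp C2 (FA G f) (FA G (\<eta> (Dm C12 f)))"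
proof -
  assume f: "f \<in> Arr C12"
  have "FA G (Cmp C12 (\<eta> (Cd C12 f)) (FA Finv (FA F f))) = FA G (Cmp C12 f (\<eta> (Dm C12 f)))"
    using eta_nat[OF f] by simp
  moreover have "FA G (Cmp C12 (\<eta> (Cd C12 f)) (FA Finv (FA F f))) =
     Cmp C2 (FA G (\<eta> (Cd C12 f))) (FA G (FA Finv (FA F f)))"
    using f by (intro fcmp[OF G]) (simp_all add: fsimps)
  moreover have "FA G (Cmp C12 f (\<eta> (Dm C12 f))) = Cmp C2 (FA G f) (FA G (\<eta> (Dm C12 f)))"
    using f by (intro fcmp[OF G]) (simp_all add: fsimps)
  ultimately show ?thesis by simp
qed

lemma Geta: "c \<in> Obj C12 \<Longrightarrow> FA G (\<eta> c) \<in> Arr C2 \<and> Dm C2 (FA G (\<eta> c)) = FO G (FO Finv (FO F c))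
   \<and> Cd C2 (FA G (\<eta> c)) = FO G c \<and> iso C2 (FA G (\<eta> c))"
  using fiso[OF G eta_iso] by (simp add: fsimps)

lemma mapb_T: "c \<in> Obj C12 \<Longrightarrow> mapb c \<in> Tset"
  unfolding mapb_def Tset_def hom_def using Geta by (simp add: fsimps)

end

context S begin

lemma b_to_c:
  assumes b: "bij_betw mapb (Obj C12) Tset"
  shows condc
  unfolding condc_def
proof (intro ballI allI impI)
  fix c u
  assume c: "c \<in> Obj C12"
    and u: "iso (product_cat C1 C2) u \<and> Dm (product_cat C1 C2) u = FO (pair_ftr F G) c"
  obtain u1 u2 where uu: "u = (u1, u2)" by (cases u)
  have u1: "iso C1 u1" "u1 \<in> Arr C1" "Dm C1 u1 = FO F c" and u2: "iso C2 u2" "u2 \<in> Arr C2" "Dm C2 u2 = FO G c"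
  proof -
    have i: "iso C1 u1" "iso C2 u2" using u uu iso_prod[of C1 C2 u1 u2] by auto
    moreover have "Dm C1 u1 = FO F c" "Dm C2 u2 = FO G c" using u uu by (auto simp: product_cat_def pair_ftr_def)
    ultimately show "iso C1 u1" "u1 \<in> Arr C1" "Dm C1 u1 = FO F c" "iso C2 u2" "u2 \<in> Arr C2" "Dm C2 u2 = FO G c"
      using iso_arr[OF cat1] iso_arr[OF cat2] by auto
  qed
  define k where "k = FA G (FA Finv u1)"
  have k: "iso C2 k" "k \<in> Arr C2" "Dm C2 k = FO G (FO Finv (FO F c))" "Cd C2 k = FO G (FO Finv (Cd C1 u1))"
    unfolding k_def using u1 fiso[OF G fiso[OF Finv u1(1)]] by (simp_all add: fsimps)
  have ge: "FA G (\<eta> c) \<in> Arr C2" "Dm C2 (FA G (\<eta> c)) = FO G (FO Finv (FO F c))"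
   "Cd C2 (FA G (\<eta> c)) = FO G c" "iso C2 (FA G (\<eta> c))" using Geta[OF c] by auto
  define \<psi> where "\<psi> = Cmp C2 (Cmp C2 u2 (FA G (\<eta> c))) (cinv C2 k)"
  have ck: "cinv C2 k \<in> Arr C2" "Dm C2 (cinv C2 k) = Cd C2 k" "Cd C2 (cinv C2 k) = Dm C2 k" "iso C2 (cinv C2 k)"
    using cinv_arr[OF cat2 k(1)] cinv_dm[OF cat2 k(1)] cinv_cd[OF cat2 k(1)] cinv_iso[OF cat2 k(1)] by auto
  have psi: "\<psi> \<in> Arr C2" "Dm C2 \<psi> = FO G (FO Finv (Cd C1 u1))" "Cd C2 \<psi> = Cd C2 u2" "iso C2 \<psi>"
    unfolding \<psi>_def using ck k ge u2 by (simp_all add: fsimps iso_cmp[OF cat2])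
  have psik: "Cmp C2 \<psi> k = Cmp C2 u2 (FA G (\<eta> c))"
    unfolding \<psi>_def using cancel_inv_r[OF cat2 k(1)] ge u2 k by (simp add: fsimps)
  have "(Cd C1 u1, Cd C2 u2, \<psi>) \<in> Tset" unfolding Tset_def hom_def using psi u1 u2 by (simp add: fsimps)
  then obtain d where d: "d \<in> Obj C12" "mapb d = (Cd C1 u1, Cd C2 u2, \<psi>)"
    using b unfolding bij_betw_def by (metis imageE)
  have dd: "FO F d = Cd C1 u1" "FO G d = Cd C2 u2" "FA G (\<eta> d) = \<psi>" using d unfolding mapb_def by auto
  obtain h where h: "h \<in> Arr C12" "Dm C12 h = c" "Cd C12 h = d" "FA F h = u1"
    using F_full[OF u1(2) c d(1)] u1 dd by (auto simp: fsimps)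
  have "Cmp C2 (FA G h) (FA G (\<eta> c)) = Cmp C2 u2 (FA G (\<eta> c))"
    using G_nat[OF h(1)] h dd psik k_def by simp
  then have Gh: "FA G h = u2"
    by (rule epi_cancel[OF cat2 ge(4), rotated -1]) (use h u2 ge in \<open>simp_all add: fsimps\<close>)
  have hiso: "iso C12 h" using F_reflect_iso h u1 by simp
  show "\<exists>!h. iso C12 h \<and> Dm C12 h = c \<and> FA (pair_ftr F G) h = u"
  proof (rule ex1I[of _ h])
    show "iso C12 h \<and> Dm C12 h = c \<and> FA (pair_ftr F G) h = u" using hiso h Gh uu by (simp add: pair_ftr_def)
  next
    fix h' assume h': "iso C12 h' \<and> Dm C12 h' = c \<and> FA (pair_ftr F G) h' = u"
    then have h'a: "h' \<in> Arr C12" "Dm C12 h' = c" "FA F h' = u1" "FA G h' = u2"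
      using iso_arr[OF cat12] uu by (auto simp: pair_ftr_def)
    define d' where "d' = Cd C12 h'"
    have d': "d' \<in> Obj C12" unfolding d'_def using h'a by (simp add: fsimps)
    have Fd': "FO F d' = Cd C1 u1" unfolding d'_def using fcd[OF F h'a(1)] h'a(3) by simp
    have "Cmp C2 (FA G (\<eta> d')) k = Cmp C2 u2 (FA G (\<eta> c))"
      using G_nat[OF h'a(1)] h'a k_def d'_def by simp
    then have "FA G (\<eta> d') = \<psi>" 
      by (rule epi_cancel[OF cat2 k(1), rotated -1, OF trans[OF _ psik[symmetric]]])
        (use h'a psi k d' Fd' u1 in \<open>simp_all add: fsimps\<close>)
    moreover have "FO F d' = Cd C1 u1" "FO G d' = Cd C2 u2" unfolding d'_def
      using fcd[OF F h'a(1)] h'a(3) fcd[OF G h'a(1)] h'a(4) by simp_all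
    ultimately have "mapb d' = mapb d" using dd unfolding mapb_def by simp
    then have "d' = d" using b d d' unfolding bij_betw_def inj_on_def by blast
    then show "h' = h" using F_faithful[OF h'a(1) h(1)] h h'a d'_def by simp
  qed
qed

end

context S begin

lemma c_to_b:
  assumes cc: condc
  shows "bij_betw mapb (Obj C12) Tset"
  unfolding bij_betw_def
proof (intro conjI)
  have U: "\<And>c u h1 h2. c \<in> Obj C12 \<Longrightarrow> iso C1 (fst u) \<Longrightarrow> iso C2 (snd u) \<Longrightarrow>
     Dm C1 (fst u) = FO F c \<Longrightarrow> Dm C2 (snd u) = FO G c \<Longrightarrow>
     \<exists>!h. iso C12 h \<and> Dm C12 h = c \<and> FA (pair_ftr F G) h = u"
  proof -
    fix c u assume a: "c \<in> Obj C12" "iso C1 (fst u)" "iso C2 (snd u)"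
       "Dm C1 (fst u) = FO F c" "Dm C2 (snd u) = FO G c"
    have "iso (product_cat C1 C2) u" using iso_prod[of C1 C2 "fst u" "snd u"] a by simp
    moreover have "Dm (product_cat C1 C2) u = FO (pair_ftr F G) c"
      using a by (cases u) (simp add: product_cat_def pair_ftr_def)
    ultimately show "\<exists>!h. iso C12 h \<and> Dm C12 h = c \<and> FA (pair_ftr F G) h = u"
      using cc a(1) unfolding condc_def by blast
  qed
  show "inj_on mapb (Obj C12)"
  proof (rule inj_onI)
    fix c c' assume c: "c \<in> Obj C12" "c' \<in> Obj C12" "mapb c = mapb c'"
    then have e: "FO F c = FO F c'" "FO G c = FO G c'" "FA G (\<eta> c) = FA G (\<eta> c')"
      unfolding mapb_def by auto
    obtain \<theta> where th: "\<theta> \<in> Arr C12" "Dm C12 \<theta> = c" "Cd C12 \<theta> = c'" "FA F \<theta> = Idt C1 (FO F c)"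
      using F_full[of "Idt C1 (FO F c)" c c'] c e by (auto simp: fsimps)
    have thi: "iso C12 \<theta>" using F_reflect_iso th iso_id[OF cat1] c by (simp add: fsimps)
    have "FA Finv (FA F \<theta>) = Idt C12 (FO Finv (FO F c))" using th c fidt[OF Finv] by (simp add: fsimps)
    then have "Cmp C12 (\<eta> c') (Idt C12 (FO Finv (FO F c))) = Cmp C12 \<theta> (\<eta> c)"
      using eta_nat[OF th(1)] th by simp
    then have "\<eta> c' = Cmp C12 \<theta> (\<eta> c)" using c e by (simp add: fsimps)
    then have "FA G (\<eta> c') = Cmp C2 (FA G \<theta>) (FA G (\<eta> c))"
      using fcmp[OF G, of "\<eta> c" \<theta>] th c by (simp add: fsimps)
    then have "Cmp C2 (FA G \<theta>) (FA G (\<eta> c)) = Cmp C2 (Idt C2 (FO G c)) (FA G (\<eta> c))"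
      using e c Geta[OF c(1)] by (simp add: fsimps)
    then have Gth: "FA G \<theta> = Idt C2 (FO G c)"
      by (rule epi_cancel[OF cat2 conjunct2[OF conjunct2[OF conjunct2[OF Geta[OF c(1)]]]], rotated -1])
        (use th c Geta[OF c(1)] in \<open>simp_all add: fsimps\<close>)
    have "\<exists>!h. iso C12 h \<and> Dm C12 h = c \<and> FA (pair_ftr F G) h = (Idt C1 (FO F c), Idt C2 (FO G c))"
      by (rule U) (use c iso_id[OF cat1] iso_id[OF cat2] in \<open>simp_all add: fsimps\<close>)
    moreover have "iso C12 \<theta> \<and> Dm C12 \<theta> = c \<and> FA (pair_ftr F G) \<theta> = (Idt C1 (FO F c), Idt C2 (FO G c))"
      using thi th Gth by (simp add: pair_ftr_def)
    moreover have "iso C12 (Idt C12 c) \<and> Dm C12 (Idt C12 c) = c \<and> FA (pair_ftr F G) (Idt C12 c) = (Idt C1 (FO F c), Idt C2 (FO G c))"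
      using c iso_id[OF cat12] fidt[OF F] fidt[OF G] by (simp add: fsimps pair_ftr_def)
    ultimately have "\<theta> = Idt C12 c" by blast
    then show "c = c'" using th c by (simp add: fsimps)
  qed
  show "mapb ` Obj C12 = Tset"
  proof
    show "mapb ` Obj C12 \<subseteq> Tset" using mapb_T by blast
    show "Tset \<subseteq> mapb ` Obj C12"
    proof
      fix t assume "t \<in> Tset"
      then obtain c1 c2 \<psi> where t: "t = (c1, c2, \<psi>)" "c1 \<in> Obj C1" "c2 \<in> Obj C2" "\<psi> \<in> Arr C2"
        "Dm C2 \<psi> = FO G (FO Finv c1)" "Cd C2 \<psi> = c2" "iso C2 \<psi>"
        unfolding Tset_def hom_def by auto
      define c0 where "c0 = FO Finv c1"
      have c0: "c0 \<in> Obj C12" unfolding c0_def using t by (simp add: fsimps)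
      define e where "e = \<epsilon> c1"
      have e: "e \<in> Arr C1" "Dm C1 e = FO F c0" "Cd C1 e = c1" "iso C1 e"
        unfolding e_def c0_def using t eps_iso by (simp_all add: fsimps)
      define k where "k = FA G (FA Finv e)"
      have k: "iso C2 k" "k \<in> Arr C2" "Dm C2 k = FO G (FO Finv (FO F c0))" "Cd C2 k = FO G c0"
        unfolding k_def using e fiso[OF G fiso[OF Finv e(4)]] t by (simp_all add: fsimps c0_def)
      have ge: "FA G (\<eta> c0) \<in> Arr C2" "Dm C2 (FA G (\<eta> c0)) = FO G (FO Finv (FO F c0))"
        "Cd C2 (FA G (\<eta> c0)) = FO G c0" "iso C2 (FA G (\<eta> c0))" using Geta[OF c0] by auto
      have cg: "cinv C2 (FA G (\<eta> c0)) \<in> Arr C2" "Dm C2 (cinv C2 (FA G (\<eta> c0))) = FO G c0"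
        "Cd C2 (cinv C2 (FA G (\<eta> c0))) = FO G (FO Finv (FO F c0))" "iso C2 (cinv C2 (FA G (\<eta> c0)))"
        using cinv_arr[OF cat2 ge(4)] cinv_dm[OF cat2 ge(4)] cinv_cd[OF cat2 ge(4)] cinv_iso[OF cat2 ge(4)] ge
        by auto
      define u2 where "u2 = Cmp C2 (Cmp C2 \<psi> k) (cinv C2 (FA G (\<eta> c0)))"
      have u2: "u2 \<in> Arr C2" "Dm C2 u2 = FO G c0" "Cd C2 u2 = c2" "iso C2 u2"
        unfolding u2_def using t k cg by (simp_all add: fsimps iso_cmp[OF cat2] c0_def)
      have "\<exists>!h. iso C12 h \<and> Dm C12 h = c0 \<and> FA (pair_ftr F G) h = (e, u2)"
        by (rule U) (use c0 e u2 in simp_all)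
      then obtain h where h: "iso C12 h" "Dm C12 h = c0" "FA F h = e" "FA G h = u2"
        by (auto simp: pair_ftr_def)
      have ha: "h \<in> Arr C12" using h iso_arr[OF cat12] by blast
      define c where "c = Cd C12 h"
      have c: "c \<in> Obj C12" "FO F c = c1" "FO G c = c2" unfolding c_def
        using ha fcd[OF F ha] fcd[OF G ha] h e u2 by (simp_all add: fsimps)
      have "Cmp C2 (FA G (\<eta> c)) k = Cmp C2 u2 (FA G (\<eta> c0))"
        using G_nat[OF ha] h k_def c_def by simp
      also have "\<dots> = Cmp C2 \<psi> k"
        unfolding u2_def using cancel_inv_r[OF cat2 ge(4)] t k by (simp add: fsimps c0_def)
      finally have "FA G (\<eta> c) = \<psi>"
        by (rule epi_cancel[OF cat2 k(1), rotated -1]) (use c t k Geta[OF c(1)] in \<open>simp_all add: c0_def\<close>)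
      then have "mapb c = t" using c t unfolding mapb_def by simp
      then show "t \<in> mapb ` Obj C12" using c by blast
    qed
  qed
qed

end


lemma graph_simps[simp]:
  "Obj (graph_cat C1 C2 \<Phi>) = graph_obj C1 C2 \<Phi>"
  "Dm (graph_cat C1 C2 \<Phi>) (x, y, f1, f2) = x"
  "Cd (graph_cat C1 C2 \<Phi>) (x, y, f1, f2) = y"
  "FO graph_p1 (a, b, \<chi>) = a" "FO graph_p2 (a, b, \<chi>) = b"
  "FA graph_p1 (x, y, f1, f2) = f1" "FA graph_p2 (x, y, f1, f2) = f2"
  by (simp_all add: graph_cat_def graph_p1_def graph_p2_def)

lemma graph_arr_iff:
  "((a1, a2, \<psi>), (b1, b2, \<chi>), f1, f2) \<in> Arr (graph_cat C1 C2 \<Phi>) \<longleftrightarrow>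
    (a1, a2, \<psi>) \<in> graph_obj C1 C2 \<Phi> \<and> (b1, b2, \<chi>) \<in> graph_obj C1 C2 \<Phi> \<and>
              f1 \<in> hom C1 a1 b1 \<and> f2 \<in> hom C2 a2 b2 \<and>
              Cmp C2 \<chi> (FA \<Phi> f1) = Cmp C2 f2 \<psi>"
  by (simp add: graph_cat_def)

lemma graph_obj_iff:
  "(a, b, \<chi>) \<in> graph_obj C1 C2 \<Phi> \<longleftrightarrow> a \<in> Obj C1 \<and> b \<in> Obj C2 \<and> \<chi> \<in> Arr C2 \<and>
     Dm C2 \<chi> = FO \<Phi> a \<and> Cd C2 \<chi> = b \<and> iso C2 \<chi>"
  by (auto simp: graph_obj_def hom_def)

locale A = S +
  fixes \<Phi> and K and K'
  assumes Phi: "functor C1 C2 \<Phi>"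
    and Kf: "functor C12 (graph_cat C1 C2 \<Phi>) K"
    and K'f: "functor (graph_cat C1 C2 \<Phi>) C12 K'"
    and KK: "feq C12 (fcomp K' K) fid"
    and KK2: "feq (graph_cat C1 C2 \<Phi>) (fcomp K K') fid"
    and p1: "feq C12 (fcomp graph_p1 K) F"
    and p2: "feq C12 (fcomp graph_p2 K) G"
begin

definition chi where "chi c = snd (snd (FO K c))"

lemma Kobj: assumes c: "c \<in> Obj C12"
  shows "FO K c = (FO F c, FO G c, chi c)" "chi c \<in> Arr C2" "Dm C2 (chi c) = FO \<Phi> (FO F c)"
    "Cd C2 (chi c) = FO G c" "iso C2 (chi c)"
proof -
  obtain a b x where abx: "FO K c = (a, b, x)" by (cases "FO K c")
  have "FO K c \<in> graph_obj C1 C2 \<Phi>" using fobj[OF Kf c] by simp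
  moreover have "a = FO F c" using p1 c abx unfolding feq_def by (metis fcomp_FO graph_simps(4))
  moreover have "b = FO G c" using p2 c abx unfolding feq_def by (metis fcomp_FO graph_simps(5))
  moreover have "x = chi c" using abx chi_def by simp
  ultimately show "FO K c = (FO F c, FO G c, chi c)" "chi c \<in> Arr C2" "Dm C2 (chi c) = FO \<Phi> (FO F c)"
    "Cd C2 (chi c) = FO G c" "iso C2 (chi c)" using abx by (auto simp: graph_obj_iff)
qed

lemma Karr: assumes f: "f \<in> Arr C12"
  shows "Cmp C2 (chi (Cd C12 f)) (FA \<Phi> (FA F f)) = Cmp C2 (FA G f) (chi (Dm C12 f))"
proof -
  obtain x y f1 f2 where xy: "FA K f = (x, y, f1, f2)" by (cases "FA K f")
  have m: "FA K f \<in> Arr (graph_cat C1 C2 \<Phi>)" using farr[OF Kf f] .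
  have x: "x = FO K (Dm C12 f)" using fdm[OF Kf f] xy by simp
  have y: "y = FO K (Cd C12 f)" using fcd[OF Kf f] xy by simp
  have f1: "f1 = FA F f" using p1 f xy unfolding feq_def by (metis fcomp_FA graph_simps(6))
  have f2: "f2 = FA G f" using p2 f xy unfolding feq_def by (metis fcomp_FA graph_simps(7))
  show ?thesis using m xy x y f1 f2 Kobj(1)[of "Dm C12 f"] Kobj(1)[of "Cd C12 f"] f
    by (simp add: graph_arr_iff fsimps)
qed

end


lemma cancel_inv_r2:
  assumes "category C" "iso C k" "x \<in> Arr C" "Dm C x = Cd C k"
  shows "Cmp C (Cmp C x k) (cinv C k) = x"
proof -
  have "Cmp C (Cmp C x k) (cinv C k) = Cmp C x (Cmp C k (cinv C k))"
    using assms by (intro assoc) (simp_all add: cinv_arr cinv_dm cinv_cd iso_arr)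
  also have "\<dots> = x" using assms by (simp add: cinv_r csimps iso_arr cinv_cd)
  finally show ?thesis .
qed

context S begin

definition beta where
  "beta c1 = Cmp C1 (Cmp C1 (\<epsilon> c1) (FA F (\<eta> (FO Finv c1)))) (cinv C1 (\<epsilon> (FO F (FO Finv c1))))"

lemma beta: assumes c1: "c1 \<in> Obj C1"
  shows "beta c1 \<in> Arr C1" "Dm C1 (beta c1) = FO F (FO Finv c1)" "Cd C1 (beta c1) = c1" "iso C1 (beta c1)"
proof -
  let ?e = "\<epsilon> (FO F (FO Finv c1))"
  have o: "FO F (FO Finv c1) \<in> Obj C1" using c1 by (simp add: fsimps)
  have ei: "iso C1 ?e" using eps_iso o by blast
  have ce: "cinv C1 ?e \<in> Arr C1" "Dm C1 (cinv C1 ?e) = FO F (FO Finv c1)"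
    "Cd C1 (cinv C1 ?e) = FO F (FO Finv (FO F (FO Finv c1)))" "iso C1 (cinv C1 ?e)"
    using cinv_arr[OF cat1 ei] cinv_dm[OF cat1 ei] cinv_cd[OF cat1 ei] cinv_iso[OF cat1 ei] o
    by (simp_all add: fsimps)
  have fe: "FA F (\<eta> (FO Finv c1)) \<in> Arr C1" "iso C1 (FA F (\<eta> (FO Finv c1)))"
    "Dm C1 (FA F (\<eta> (FO Finv c1))) = FO F (FO Finv (FO F (FO Finv c1)))"
    "Cd C1 (FA F (\<eta> (FO Finv c1))) = FO F (FO Finv c1)"
    using c1 fiso[OF F eta_iso] by (simp_all add: fsimps)
  show "beta c1 \<in> Arr C1" "Dm C1 (beta c1) = FO F (FO Finv c1)" "Cd C1 (beta c1) = c1" "iso C1 (beta c1)"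
    unfolding beta_def using ce fe c1 eps_iso[OF c1]
    by (simp_all add: fsimps iso_cmp[OF cat1])
qed

lemma Feta: assumes c: "c \<in> Obj C12" shows "FA F (\<eta> c) = beta (FO F c)"
proof -
  have ec: "\<eta> c \<in> Arr C12" "Dm C12 (\<eta> c) = FO Finv (FO F c)" "Cd C12 (\<eta> c) = c" "iso C12 (\<eta> c)"
    using c eta_iso by (simp_all add: fsimps)
  have o: "FO Finv (FO F c) \<in> Obj C12" using c by (simp add: fsimps)
  have "Cmp C12 (\<eta> c) (FA Finv (FA F (\<eta> c))) = Cmp C12 (\<eta> c) (\<eta> (FO Finv (FO F c)))"
    using eta_nat[OF ec(1)] ec by simp
  then have 1: "FA Finv (FA F (\<eta> c)) = \<eta> (FO Finv (FO F c))"
    by (rule mono_cancel[OF cat12 ec(4), rotated -1]) (use ec o in \<open>simp_all add: fsimps\<close>)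
  let ?a = "FA F (\<eta> c)"
  have a: "?a \<in> Arr C1" "Dm C1 ?a = FO F (FO Finv (FO F c))" "Cd C1 ?a = FO F c"
    using ec by (simp_all add: fsimps)
  have 2: "Cmp C1 (\<epsilon> (FO F c)) (FA F (\<eta> (FO Finv (FO F c)))) = Cmp C1 ?a (\<epsilon> (FO F (FO Finv (FO F c))))"
    using eps_nat[OF a(1)] a 1 by simp
  have o2: "FO F (FO Finv (FO F c)) \<in> Obj C1" using c by (simp add: fsimps)
  have "?a = Cmp C1 (Cmp C1 ?a (\<epsilon> (FO F (FO Finv (FO F c))))) (cinv C1 (\<epsilon> (FO F (FO Finv (FO F c)))))"
    using cancel_inv_r2[OF cat1 eps_iso[OF o2] a(1)] a o2 by (simp add: fsimps)
  also have "\<dots> = beta (FO F c)" unfolding beta_def 2[symmetric] by simp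
  finally show ?thesis .
qed

end

context A begin

lemma K'K: "c \<in> Obj C12 \<Longrightarrow> FO K' (FO K c) = c" using KK unfolding feq_def by simp
lemma KK': "t \<in> graph_obj C1 C2 \<Phi> \<Longrightarrow> FO K (FO K' t) = t" using KK2 unfolding feq_def by simp
lemma K'obj: "t \<in> graph_obj C1 C2 \<Phi> \<Longrightarrow> FO K' t \<in> Obj C12" using fobj[OF K'f] by simp

lemma key: assumes c: "c \<in> Obj C12"
  shows "Cmp C2 (chi c) (FA \<Phi> (beta (FO F c))) = Cmp C2 (FA G (\<eta> c)) (chi (FO Finv (FO F c)))"
  using Karr[OF eta_arr[OF c]] c Feta[OF c] by (simp add: fsimps)

lemma a_to_b: "bij_betw mapb (Obj C12) Tset"
  unfolding bij_betw_def
proof (intro conjI)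
  have dl: "\<And>c1. c1 \<in> Obj C1 \<Longrightarrow> FA \<Phi> (beta c1) \<in> Arr C2 \<and> iso C2 (FA \<Phi> (beta c1)) \<and>
     Dm C2 (FA \<Phi> (beta c1)) = FO \<Phi> (FO F (FO Finv c1)) \<and> Cd C2 (FA \<Phi> (beta c1)) = FO \<Phi> c1"
    using beta fiso[OF Phi] farr[OF Phi] fdm[OF Phi] fcd[OF Phi] by simp
  have gl: "\<And>c1. c1 \<in> Obj C1 \<Longrightarrow> chi (FO Finv c1) \<in> Arr C2 \<and> iso C2 (chi (FO Finv c1)) \<and>
     Dm C2 (chi (FO Finv c1)) = FO \<Phi> (FO F (FO Finv c1)) \<and> Cd C2 (chi (FO Finv c1)) = FO G (FO Finv c1)"
    using Kobj fobj[OF Finv] by simp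
  show "inj_on mapb (Obj C12)"
  proof (rule inj_onI)
    fix c c' assume c: "c \<in> Obj C12" "c' \<in> Obj C12" "mapb c = mapb c'"
    then have e: "FO F c = FO F c'" "FO G c = FO G c'" "FA G (\<eta> c) = FA G (\<eta> c')"
      unfolding mapb_def by auto
    have o: "FO F c \<in> Obj C1" using c by (simp add: fsimps)
    have "Cmp C2 (chi c) (FA \<Phi> (beta (FO F c))) = Cmp C2 (chi c') (FA \<Phi> (beta (FO F c)))"
      using key[OF c(1)] key[OF c(2)] e by simp
    then have "chi c = chi c'"
      by (rule epi_cancel[OF cat2 conjunct1[OF conjunct2[OF dl[OF o]]], rotated -1])
        (use Kobj[OF c(1)] Kobj[OF c(2)] dl[OF o] e in simp_all)
    then have "FO K c = FO K c'" using Kobj(1)[OF c(1)] Kobj(1)[OF c(2)] e by simp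
    then show "c = c'" using K'K c by metis
  qed
  show "mapb ` Obj C12 = Tset"
  proof
    show "mapb ` Obj C12 \<subseteq> Tset" using mapb_T by blast
    show "Tset \<subseteq> mapb ` Obj C12"
    proof
      fix t assume "t \<in> Tset"
      then obtain c1 c2 \<psi> where t: "t = (c1, c2, \<psi>)" "c1 \<in> Obj C1" "c2 \<in> Obj C2" "\<psi> \<in> Arr C2"
        "Dm C2 \<psi> = FO G (FO Finv c1)" "Cd C2 \<psi> = c2" "iso C2 \<psi>"
        unfolding Tset_def hom_def by auto
      let ?d = "FA \<Phi> (beta c1)" and ?g = "chi (FO Finv c1)"
      have d: "?d \<in> Arr C2" "iso C2 ?d" "Dm C2 ?d = FO \<Phi> (FO F (FO Finv c1))" "Cd C2 ?d = FO \<Phi> c1"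
        using dl[OF t(2)] by auto
      have g: "?g \<in> Arr C2" "iso C2 ?g" "Dm C2 ?g = FO \<Phi> (FO F (FO Finv c1))" "Cd C2 ?g = FO G (FO Finv c1)"
        using gl[OF t(2)] by auto
      have cd: "cinv C2 ?d \<in> Arr C2" "Dm C2 (cinv C2 ?d) = FO \<Phi> c1"
        "Cd C2 (cinv C2 ?d) = FO \<Phi> (FO F (FO Finv c1))" "iso C2 (cinv C2 ?d)"
        using cinv_arr[OF cat2 d(2)] cinv_dm[OF cat2 d(2)] cinv_cd[OF cat2 d(2)] cinv_iso[OF cat2 d(2)] d
        by auto
      define \<chi> where "\<chi> = Cmp C2 (Cmp C2 \<psi> ?g) (cinv C2 ?d)"
      have ch: "\<chi> \<in> Arr C2" "Dm C2 \<chi> = FO \<Phi> c1" "Cd C2 \<chi> = c2" "iso C2 \<chi>"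
        unfolding \<chi>_def using t g cd by (simp_all add: fsimps iso_cmp[OF cat2])
      have tg: "(c1, c2, \<chi>) \<in> graph_obj C1 C2 \<Phi>" using ch t by (simp add: graph_obj_iff)
      define c where "c = FO K' (c1, c2, \<chi>)"
      have c: "c \<in> Obj C12" unfolding c_def using K'obj tg by blast
      have Kc: "FO K c = (c1, c2, \<chi>)" unfolding c_def using KK' tg by blast
      then have cc: "FO F c = c1" "FO G c = c2" "chi c = \<chi>" using Kobj(1)[OF c] by auto
      have "Cmp C2 (FA G (\<eta> c)) ?g = Cmp C2 \<chi> ?d" using key[OF c] cc by simp
      also have "\<dots> = Cmp C2 \<psi> ?g" unfolding \<chi>_def
        using cancel_inv_r[OF cat2 d(2)] t g d by (simp add: fsimps)
      finally have "FA G (\<eta> c) = \<psi>"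
        by (rule epi_cancel[OF cat2 g(2), rotated -1]) (use c cc t g Geta[OF c] in simp_all)
      then have "mapb c = t" using cc t unfolding mapb_def by simp
      then show "t \<in> mapb ` Obj C12" using c by blast
    qed
  qed
qed

end


lemma graph_simps2[simp]:
  "Idt (graph_cat C1 C2 \<Phi>) (a, b, \<psi>) = ((a, b, \<psi>), (a, b, \<psi>), Idt C1 a, Idt C2 b)"
  "Cmp (graph_cat C1 C2 \<Phi>) (y', z, g1, g2) (x, y, f1, f2) = (x, z, Cmp C1 g1 f1, Cmp C2 g2 f2)"
  by (simp_all add: graph_cat_def)

lemma graph_arr_cases:
  assumes "f \<in> Arr (graph_cat C1 C2 \<Phi>)"
  obtains a1 a2 \<psi> b1 b2 \<chi> f1 f2 where "f = ((a1, a2, \<psi>), (b1, b2, \<chi>), f1, f2)"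
  using assms by (cases f) auto

lemma graph_category:
  assumes Phi: "functor C1 C2 \<Phi>"
  shows "category (graph_cat C1 C2 \<Phi>)"
proof -
  have c1: "category C1" and c2: "category C2" using Phi fc1 fc2 by auto
  note cs = csimps[OF c1] csimps[OF c2] farr[OF Phi] fdm[OF Phi] fcd[OF Phi] fobj[OF Phi] fidt[OF Phi]
  let ?G = "graph_cat C1 C2 \<Phi>"
  have A: "\<forall>f\<in>Arr ?G. Dm ?G f \<in> Obj ?G \<and> Cd ?G f \<in> Obj ?G"
  proof
    fix f assume f: "f \<in> Arr ?G"
    obtain a1 a2 \<psi> b1 b2 \<chi> f1 f2 where ff: "f = ((a1, a2, \<psi>), (b1, b2, \<chi>), f1, f2)"
      using f by (rule graph_arr_cases)
    show "Dm ?G f \<in> Obj ?G \<and> Cd ?G f \<in> Obj ?G" using f ff by (simp add: graph_arr_iff)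
  qed
  have B: "\<forall>x\<in>Obj ?G. Idt ?G x \<in> Arr ?G \<and> Dm ?G (Idt ?G x) = x \<and> Cd ?G (Idt ?G x) = x"
  proof
    fix x assume x: "x \<in> Obj ?G"
    obtain a b \<psi> where xx: "x = (a, b, \<psi>)" by (cases x)
    have p: "a \<in> Obj C1" "b \<in> Obj C2" "\<psi> \<in> Arr C2" "Dm C2 \<psi> = FO \<Phi> a" "Cd C2 \<psi> = b" "iso C2 \<psi>"
      using x xx by (auto simp: graph_obj_iff)
    show "Idt ?G x \<in> Arr ?G \<and> Dm ?G (Idt ?G x) = x \<and> Cd ?G (Idt ?G x) = x"
      using p x xx by (simp add: graph_arr_iff hom_def cs)
  qed
  have C: "\<forall>f\<in>Arr ?G. \<forall>g\<in>Arr ?G. Cd ?G f = Dm ?G g \<longrightarrow>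
        Cmp ?G g f \<in> Arr ?G \<and> Dm ?G (Cmp ?G g f) = Dm ?G f \<and> Cd ?G (Cmp ?G g f) = Cd ?G g"
  proof (intro ballI impI)
    fix f g assume f: "f \<in> Arr ?G" and g: "g \<in> Arr ?G" and fg: "Cd ?G f = Dm ?G g"
    obtain a1 a2 \<psi> b1 b2 \<chi> f1 f2 where ff: "f = ((a1, a2, \<psi>), (b1, b2, \<chi>), f1, f2)"
      using f by (rule graph_arr_cases)
    obtain b1' b2' \<chi>' d1 d2 \<omega> g1 g2 where gg: "g = ((b1', b2', \<chi>'), (d1, d2, \<omega>), g1, g2)"
      using g by (rule graph_arr_cases)
    have e: "b1' = b1" "b2' = b2" "\<chi>' = \<chi>" using fg ff gg by auto
    have pf: "(a1, a2, \<psi>) \<in> graph_obj C1 C2 \<Phi>" "(b1, b2, \<chi>) \<in> graph_obj C1 C2 \<Phi>"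
      "f1 \<in> hom C1 a1 b1" "f2 \<in> hom C2 a2 b2" "Cmp C2 \<chi> (FA \<Phi> f1) = Cmp C2 f2 \<psi>"
      using f ff by (simp_all add: graph_arr_iff)
    have pg: "(d1, d2, \<omega>) \<in> graph_obj C1 C2 \<Phi>"
      "g1 \<in> hom C1 b1 d1" "g2 \<in> hom C2 b2 d2" "Cmp C2 \<omega> (FA \<Phi> g1) = Cmp C2 g2 \<chi>"
      using g gg e by (simp_all add: graph_arr_iff)
    have o: "\<psi> \<in> Arr C2" "Dm C2 \<psi> = FO \<Phi> a1" "Cd C2 \<psi> = a2" "\<chi> \<in> Arr C2" "Dm C2 \<chi> = FO \<Phi> b1" "Cd C2 \<chi> = b2"
      "\<omega> \<in> Arr C2" "Dm C2 \<omega> = FO \<Phi> d1" "Cd C2 \<omega> = d2"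
      using pf pg by (auto simp: graph_obj_iff)
    have h: "f1 \<in> Arr C1" "Dm C1 f1 = a1" "Cd C1 f1 = b1" "f2 \<in> Arr C2" "Dm C2 f2 = a2" "Cd C2 f2 = b2"
      "g1 \<in> Arr C1" "Dm C1 g1 = b1" "Cd C1 g1 = d1" "g2 \<in> Arr C2" "Dm C2 g2 = b2" "Cd C2 g2 = d2"
      using pf pg by (auto simp: hom_def)
    have "Cmp C2 \<omega> (FA \<Phi> (Cmp C1 g1 f1)) = Cmp C2 \<omega> (Cmp C2 (FA \<Phi> g1) (FA \<Phi> f1))"
      using fcmp[OF Phi, of f1 g1] h by simp
    also have "\<dots> = Cmp C2 (Cmp C2 \<omega> (FA \<Phi> g1)) (FA \<Phi> f1)"
      using o h by (intro assoc[OF c2, symmetric]) (simp_all add: cs)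
    also have "\<dots> = Cmp C2 (Cmp C2 g2 \<chi>) (FA \<Phi> f1)" using pg by simp
    also have "\<dots> = Cmp C2 g2 (Cmp C2 \<chi> (FA \<Phi> f1))"
      using o h by (intro assoc[OF c2]) (simp_all add: cs)
    also have "\<dots> = Cmp C2 g2 (Cmp C2 f2 \<psi>)" using pf by simp
    also have "\<dots> = Cmp C2 (Cmp C2 g2 f2) \<psi>"
      using o h by (intro assoc[OF c2, symmetric]) (simp_all add: cs)
    finally have cnd: "Cmp C2 \<omega> (FA \<Phi> (Cmp C1 g1 f1)) = Cmp C2 (Cmp C2 g2 f2) \<psi>" .
    show "Cmp ?G g f \<in> Arr ?G \<and> Dm ?G (Cmp ?G g f) = Dm ?G f \<and> Cd ?G (Cmp ?G g f) = Cd ?G g"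
      using ff gg pf pg cnd h by (simp add: graph_arr_iff hom_def cs)
  qed
  have D: "\<forall>f\<in>Arr ?G. Cmp ?G f (Idt ?G (Dm ?G f)) = f \<and> Cmp ?G (Idt ?G (Cd ?G f)) f = f"
  proof
    fix f assume f: "f \<in> Arr ?G"
    obtain a1 a2 \<psi> b1 b2 \<chi> f1 f2 where ff: "f = ((a1, a2, \<psi>), (b1, b2, \<chi>), f1, f2)"
      using f by (rule graph_arr_cases)
    have h: "f1 \<in> Arr C1" "Dm C1 f1 = a1" "Cd C1 f1 = b1" "f2 \<in> Arr C2" "Dm C2 f2 = a2" "Cd C2 f2 = b2"
      using f ff by (auto simp: hom_def graph_arr_iff)
    show "Cmp ?G f (Idt ?G (Dm ?G f)) = f \<and> Cmp ?G (Idt ?G (Cd ?G f)) f = f"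
      using ff h by (simp add: cs)
  qed
  have E: "\<forall>f\<in>Arr ?G. \<forall>g\<in>Arr ?G. \<forall>h\<in>Arr ?G. Cd ?G f = Dm ?G g \<longrightarrow> Cd ?G g = Dm ?G h \<longrightarrow>
        Cmp ?G h (Cmp ?G g f) = Cmp ?G (Cmp ?G h g) f"
  proof (intro ballI impI)
    fix f g h assume f: "f \<in> Arr ?G" and g: "g \<in> Arr ?G" and hh: "h \<in> Arr ?G"
      and fg: "Cd ?G f = Dm ?G g" and gh: "Cd ?G g = Dm ?G h"
    obtain a1 a2 \<psi> b1 b2 \<chi> f1 f2 where ff: "f = ((a1, a2, \<psi>), (b1, b2, \<chi>), f1, f2)"
      using f by (rule graph_arr_cases)
    obtain b1' b2' \<chi>' d1 d2 \<omega> g1 g2 where gg: "g = ((b1', b2', \<chi>'), (d1, d2, \<omega>), g1, g2)"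
      using g by (rule graph_arr_cases)
    obtain d1' d2' \<omega>' e1 e2 \<tau> h1 h2 where hhh: "h = ((d1', d2', \<omega>'), (e1, e2, \<tau>), h1, h2)"
      using hh by (rule graph_arr_cases)
    have h: "f1 \<in> Arr C1" "Cd C1 f1 = b1" "f2 \<in> Arr C2" "Cd C2 f2 = b2"
      "g1 \<in> Arr C1" "Dm C1 g1 = b1'" "Cd C1 g1 = d1" "g2 \<in> Arr C2" "Dm C2 g2 = b2'" "Cd C2 g2 = d2"
      "h1 \<in> Arr C1" "Dm C1 h1 = d1'" "h2 \<in> Arr C2" "Dm C2 h2 = d2'"
      using f ff g gg hh hhh by (auto simp: hom_def graph_arr_iff)
    have e: "b1' = b1" "b2' = b2" "d1' = d1" "d2' = d2" using fg gh ff gg hhh by auto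
    show "Cmp ?G h (Cmp ?G g f) = Cmp ?G (Cmp ?G h g) f"
      using ff gg hhh h e by (simp add: assoc[OF c1] assoc[OF c2])
  qed
  show ?thesis unfolding category_def using A B C D E by blast
qed


lemma bij_functor_inverse:
  assumes K: "functor C D K" and bo: "bij_betw (FO K) (Obj C) (Obj D)"
    and ba: "bij_betw (FA K) (Arr C) (Arr D)"
  shows "\<exists>K'. functor D C K' \<and> feq C (fcomp K' K) fid \<and> feq D (fcomp K K') fid"
proof -
  define io where "io = the_inv_into (Obj C) (FO K)"
  define ia where "ia = the_inv_into (Arr C) (FA K)"
  have io1: "\<And>y. y \<in> Obj D \<Longrightarrow> io y \<in> Obj C \<and> FO K (io y) = y"
    unfolding io_def using bo bij_betw_def the_inv_into_into f_the_inv_into_f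
    by (metis order_refl)
  have io2: "\<And>x. x \<in> Obj C \<Longrightarrow> io (FO K x) = x"
    unfolding io_def using bo bij_betw_def the_inv_into_f_f by metis
  have ia1: "\<And>y. y \<in> Arr D \<Longrightarrow> ia y \<in> Arr C \<and> FA K (ia y) = y"
    unfolding ia_def using ba bij_betw_def the_inv_into_into f_the_inv_into_f
    by (metis order_refl)
  have ia2: "\<And>x. x \<in> Arr C \<Longrightarrow> ia (FA K x) = x"
    unfolding ia_def using ba bij_betw_def the_inv_into_f_f by metis
  have cC: "category C" and cD: "category D" using K fc1 fc2 by auto
  note ks = farr[OF K] fdm[OF K] fcd[OF K] fobj[OF K] fidt[OF K]
  have dm: "\<And>g. g \<in> Arr D \<Longrightarrow> Dm C (ia g) = io (Dm D g)"
    using ia1 io2 ks csimps[OF cC] by metis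
  have cd: "\<And>g. g \<in> Arr D \<Longrightarrow> Cd C (ia g) = io (Cd D g)"
    using ia1 io2 ks csimps[OF cC] by metis
  have idt: "\<And>y. y \<in> Obj D \<Longrightarrow> ia (Idt D y) = Idt C (io y)"
  proof -
    fix y assume y: "y \<in> Obj D"
    have "FA K (Idt C (io y)) = Idt D y" using io1[OF y] ks by simp
    then show "ia (Idt D y) = Idt C (io y)" using ia2 io1[OF y] csimps[OF cC] by metis
  qed
  have cmp: "\<And>f g. f \<in> Arr D \<Longrightarrow> g \<in> Arr D \<Longrightarrow> Cd D f = Dm D g \<Longrightarrow>
      ia (Cmp D g f) = Cmp C (ia g) (ia f)"
  proof -
    fix f g assume f: "f \<in> Arr D" and g: "g \<in> Arr D" and fg: "Cd D f = Dm D g"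
    have e: "Cd C (ia f) = Dm C (ia g)" using cd[OF f] dm[OF g] fg by simp
    have "FA K (Cmp C (ia g) (ia f)) = Cmp D g f" using fcmp[OF K] ia1[OF f] ia1[OF g] e by simp
    then show "ia (Cmp D g f) = Cmp C (ia g) (ia f)"
      using ia2 ia1[OF f] ia1[OF g] e csimps[OF cC] by metis
  qed
  define K' where "K' = \<lparr>FO = io, FA = ia\<rparr>"
  have "functor D C K'" unfolding functor_def K'_def
    using cC cD io1 ia1 dm cd idt cmp by simp
  moreover have "feq C (fcomp K' K) fid" unfolding feq_def K'_def using io2 ia2 by simp
  moreover have "feq D (fcomp K K') fid" unfolding feq_def K'_def using io1 ia1 by simp
  ultimately show ?thesis by blast
qed

context S begin

definition Kb where
  "Kb = \<lparr>FO = mapb, FA = (\<lambda>f. (mapb (Dm C12 f), mapb (Cd C12 f), FA F f, FA G f))\<rparr>"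

lemma graph_obj_T: "graph_obj C1 C2 (fcomp G Finv) = Tset"
  unfolding graph_obj_def Tset_def by simp

lemma Phi_b: "functor C1 C2 (fcomp G Finv)" using functor_fcomp[OF Finv G] .

lemma Kb_functor: "functor C12 (graph_cat C1 C2 (fcomp G Finv)) Kb"
proof -
  have arr: "\<And>f. f \<in> Arr C12 \<Longrightarrow> FA Kb f \<in> Arr (graph_cat C1 C2 (fcomp G Finv))"
  proof -
    fix f assume f: "f \<in> Arr C12"
    have o: "mapb (Dm C12 f) \<in> Tset" "mapb (Cd C12 f) \<in> Tset" using f mapb_T by (simp_all add: fsimps)
    show "FA Kb f \<in> Arr (graph_cat C1 C2 (fcomp G Finv))"
      unfolding Kb_def mapb_def using o G_nat[OF f] f
      by (simp add: graph_arr_iff graph_obj_T hom_def fsimps mapb_def)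
  qed
  show ?thesis unfolding functor_def
  proof (intro conjI ballI impI)
    show "category C12" by (rule cat12)
    show "category (graph_cat C1 C2 (fcomp G Finv))" by (rule graph_category[OF Phi_b])
    show "\<And>x. x \<in> Obj C12 \<Longrightarrow> FO Kb x \<in> Obj (graph_cat C1 C2 (fcomp G Finv))"
      using mapb_T graph_obj_T by (simp add: Kb_def)
    show "\<And>f. f \<in> Arr C12 \<Longrightarrow> FA Kb f \<in> Arr (graph_cat C1 C2 (fcomp G Finv))" by (rule arr)
    show "\<And>f. f \<in> Arr C12 \<Longrightarrow> Dm (graph_cat C1 C2 (fcomp G Finv)) (FA Kb f) = FO Kb (Dm C12 f)"
      by (simp add: Kb_def mapb_def)
    show "\<And>f. f \<in> Arr C12 \<Longrightarrow> Cd (graph_cat C1 C2 (fcomp G Finv)) (FA Kb f) = FO Kb (Cd C12 f)"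
      by (simp add: Kb_def mapb_def)
    show "\<And>x. x \<in> Obj C12 \<Longrightarrow> FA Kb (Idt C12 x) = Idt (graph_cat C1 C2 (fcomp G Finv)) (FO Kb x)"
      by (simp add: Kb_def mapb_def fsimps fidt[OF F] fidt[OF G])
    show "\<And>f g. f \<in> Arr C12 \<Longrightarrow> g \<in> Arr C12 \<Longrightarrow> Cd C12 f = Dm C12 g \<Longrightarrow>
       FA Kb (Cmp C12 g f) = Cmp (graph_cat C1 C2 (fcomp G Finv)) (FA Kb g) (FA Kb f)"
      by (simp add: Kb_def mapb_def fsimps fcmp[OF F] fcmp[OF G])
  qed
qed

end

context S begin

lemma b_to_a:
  assumes b: "bij_betw mapb (Obj C12) Tset"
  shows "admissible C1 C2 C12 F G"
proof -
  let ?Gr = "graph_cat C1 C2 (fcomp G Finv)"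
  have bo: "bij_betw (FO Kb) (Obj C12) (Obj ?Gr)" using b graph_obj_T by (simp add: Kb_def)
  have inj: "inj_on mapb (Obj C12)" using b bij_betw_def by blast
  have ba: "bij_betw (FA Kb) (Arr C12) (Arr ?Gr)"
    unfolding bij_betw_def
  proof (intro conjI)
    show "inj_on (FA Kb) (Arr C12)"
    proof (rule inj_onI)
      fix f g assume f: "f \<in> Arr C12" and g: "g \<in> Arr C12" and e: "FA Kb f = FA Kb g"
      have "mapb (Dm C12 f) = mapb (Dm C12 g)" "mapb (Cd C12 f) = mapb (Cd C12 g)" "FA F f = FA F g"
        using e by (simp_all add: Kb_def)
      then have "Dm C12 f = Dm C12 g" "Cd C12 f = Cd C12 g" "FA F f = FA F g"
        using inj f g unfolding inj_on_def by (simp_all add: fsimps)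
      then show "f = g" using F_faithful f g by blast
    qed
    show "FA Kb ` Arr C12 = Arr ?Gr"
    proof
      show "FA Kb ` Arr C12 \<subseteq> Arr ?Gr" using farr[OF Kb_functor] by blast
      show "Arr ?Gr \<subseteq> FA Kb ` Arr C12"
      proof
        fix x assume x: "x \<in> Arr ?Gr"
        obtain a1 a2 \<psi> b1 b2 \<chi> f1 f2 where xx: "x = ((a1, a2, \<psi>), (b1, b2, \<chi>), f1, f2)"
          using x by (rule graph_arr_cases)
        have p: "(a1, a2, \<psi>) \<in> Tset" "(b1, b2, \<chi>) \<in> Tset" "f1 \<in> hom C1 a1 b1" "f2 \<in> hom C2 a2 b2"
          "Cmp C2 \<chi> (FA G (FA Finv f1)) = Cmp C2 f2 \<psi>"
          using x xx graph_obj_T by (simp_all add: graph_arr_iff)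
        obtain c where c: "c \<in> Obj C12" "mapb c = (a1, a2, \<psi>)" using p(1) b bij_betw_def by (metis imageE)
        obtain d where d: "d \<in> Obj C12" "mapb d = (b1, b2, \<chi>)" using p(2) b bij_betw_def by (metis imageE)
        have cc: "FO F c = a1" "FO G c = a2" "FA G (\<eta> c) = \<psi>" using c by (simp_all add: mapb_def)
        have dd: "FO F d = b1" "FO G d = b2" "FA G (\<eta> d) = \<chi>" using d by (simp_all add: mapb_def)
        have f1: "f1 \<in> Arr C1" "Dm C1 f1 = FO F c" "Cd C1 f1 = FO F d" using p(3) cc dd by (auto simp: hom_def)
        have f2: "f2 \<in> Arr C2" "Dm C2 f2 = FO G c" "Cd C2 f2 = FO G d" using p(4) cc dd by (auto simp: hom_def)
        obtain h where h: "h \<in> Arr C12" "Dm C12 h = c" "Cd C12 h = d" "FA F h = f1"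
          using F_full[OF f1(1) c(1) d(1) f1(2,3)] by blast
        have "Cmp C2 (FA G h) (FA G (\<eta> c)) = Cmp C2 f2 (FA G (\<eta> c))"
          using G_nat[OF h(1)] h p(5) cc dd by simp
        then have Gh: "FA G h = f2"
          by (rule epi_cancel[OF cat2 conjunct2[OF conjunct2[OF conjunct2[OF Geta[OF c(1)]]]], rotated -1])
            (use h f2 Geta[OF c(1)] in \<open>simp_all add: fsimps\<close>)
        have "FA Kb h = x" using xx h Gh c d by (simp add: Kb_def)
        then show "x \<in> FA Kb ` Arr C12" using h by blast
      qed
    qed
  qed
  obtain K' where K': "functor ?Gr C12 K'" "feq C12 (fcomp K' Kb) fid" "feq ?Gr (fcomp Kb K') fid"
    using bij_functor_inverse[OF Kb_functor bo ba] by blast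
  have "feq C12 (fcomp graph_p1 Kb) F" "feq C12 (fcomp graph_p2 Kb) G"
    unfolding feq_def by (simp_all add: Kb_def mapb_def)
  then have "corr_iso C12 ?Gr F G graph_p1 graph_p2 Kb"
    unfolding corr_iso_def using Kb_functor K' by blast
  then show ?thesis unfolding admissible_def using Phi_b by blast
qed

lemma adm_to_b:
  assumes "admissible C1 C2 C12 F G"
  shows "bij_betw mapb (Obj C12) Tset"
proof -
  obtain \<Phi> K where Phi: "functor C1 C2 \<Phi>" and ci: "corr_iso C12 (graph_cat C1 C2 \<Phi>) F G graph_p1 graph_p2 K"
    using assms unfolding admissible_def by blast
  obtain K' where "functor (graph_cat C1 C2 \<Phi>) C12 K'" "feq C12 (fcomp K' K) fid"
    "feq (graph_cat C1 C2 \<Phi>) (fcomp K K') fid"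
    using ci unfolding corr_iso_def by blast
  moreover have "functor C12 (graph_cat C1 C2 \<Phi>) K" "feq C12 (fcomp graph_p1 K) F" "feq C12 (fcomp graph_p2 K) G"
    using ci unfolding corr_iso_def by blast+
  ultimately interpret A C1 C2 C12 F G Finv \<eta> \<epsilon> \<Phi> K K'
    using Phi by unfold_locales blast+
  show ?thesis by (rule a_to_b)
qed

end

theorem lemma4p6p5:
  fixes C1 :: "('o1, 'a1) cat" and C2 :: "('o2, 'a2) cat" and C12 :: "('o, 'a) cat"
    and F :: "('o, 'a, 'o1, 'a1) ftr" and G :: "('o, 'a, 'o2, 'a2) ftr"
    and Finv :: "('o1, 'a1, 'o, 'a) ftr" and \<eta> :: "'o \<Rightarrow> 'a" and \<epsilon> :: "'o1 \<Rightarrow> 'a1"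
  assumes F: "functor C12 C1 F" and G: "functor C12 C2 G"
    and equiv: "equivalence C12 C1 F"
    and qi: "quasi_inverse C12 C1 F Finv \<eta> \<epsilon>"
  shows "(admissible C1 C2 C12 F G \<longleftrightarrow>
           bij_betw (\<lambda>c. (FO F c, FO G c, FA G (\<eta> c))) (Obj C12)
             {(c1, c2, \<psi>). c1 \<in> Obj C1 \<and> c2 \<in> Obj C2 \<and>
                \<psi> \<in> hom C2 (FO G (FO Finv c1)) c2 \<and> iso C2 \<psi>})
       \<and> (admissible C1 C2 C12 F G \<longleftrightarrow>
           (\<forall>c\<in>Obj C12. \<forall>u. iso (product_cat C1 C2) u \<and>
               Dm (product_cat C1 C2) u = FO (pair_ftr F G) c \<longrightarrow>
              (\<exists>!h. iso C12 h \<and> Dm C12 h = c \<and> FA (pair_ftr F G) h = u)))"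
proof -
  interpret S C1 C2 C12 F G Finv \<eta> \<epsilon> using F G qi by unfold_locales
  have ab: "admissible C1 C2 C12 F G \<longleftrightarrow> bij_betw mapb (Obj C12) Tset"
    using adm_to_b b_to_a by blast
  have bc: "bij_betw mapb (Obj C12) Tset \<longleftrightarrow> condc" using b_to_c c_to_b by blast
  show ?thesis using ab bc unfolding mapb_def Tset_def condc_def by blast
qed


end
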